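(* Let $\Xi$ be a set in a normed space and let $\xi\mapsto\tilde A(\xi)\in\mathbb{R}^{n\times n}$ and $\xi\mapsto\tilde B(\xi)\in\mathbb{R}^{n\times m}$ be Lipschitz continuous with respect to the spectral norm, with Lipschitz constants $L_A$ and $L_B$ respectively. Fix $\alpha>0$, $r>0$, $\theta\in\mathbb{R}$ and $\mu>0$. For $P\in\mathbb{S}^n$, $Y\in\mathbb{R}^{m\times n}$, $\gamma\in\mathbb{R}$ set $X(\xi)=\tilde A(\xi)P-\tilde B(\xi)Y$ and define the matrix-valued constraint maps $$f_1(P,Y,\gamma,\xi)=X(\xi)+X(\xi)^T+2\alpha P-\gamma I,$$ $$f_2(P,Y,\gamma,\xi)=\begin{bmatrix}-rP & X(\xi)\\ X(\xi)^T & -rP\end{bmatrix}-\gamma I,$$ $$f_3(P,Y,\gamma,\xi)=\begin{bmatrix}\sin\theta\,(X(\xi)+X(\xi)^T) & \cos\theta\,(X(\xi)-X(\xi)^T)\\ \cos\theta\,(X(\xi)^T-X(\xi)) & \sin\theta\,(X(\xi)+X(\xi)^T)\end{bmatrix}-\gamma I.$$ Then each $f_k$, $k=1,2,3$, is Lipschitz continuous in $\xi$ (with respect to the spectral norm), uniformly over all $\gamma\in\mathbb{R}$ and all $P,Y$ satisfying $0\preceq P\preceq\mu I$ and $\|Y\|\le\mu$, with Lipschitz constant $$L=2\mu(L_A+L_B)\max\big(1,\ |\sin\theta|+|\cos\theta|\big),$$ i.e. $\|f_k(P,Y,\gamma,\xi_1)-f_k(P,Y,\gamma,\xi_2)\|\le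 L\|\xi_1-\xi_2\|$ for all $\xi_1,\xi_2\in\Xi$.
   Context: $\|\cdot\|$ denotes the spectral norm of a matrix; $\mathbb{S}^n$ is the set of real symmetric $n\times n$ matrices and $\preceq$ is the Loewner order. The maps $f_1,f_2,f_3$ encode the LMI constraints $f_k\prec 0$ of a regional pole-placement (D-stability) problem for the uncertain system $\dot x=\tilde A(\xi)x+\tilde B(\xi)u$, with parameters $\alpha$ (minimal decay), $r$ (disk radius) and $\theta$ (conic sector). *)

theory Defs
  imports "HOL-Analysis.Analysis"
begin

definition spec_norm :: "real^'n^'m \<Rightarrow> real" where
  "spec_norm A = onorm (\<lambda>x. A *v x)"

definition loewner_le :: "real^'n^'n \<Rightarrow> real^'n^'n \<Rightarrow> bool" where
  "loewner_le A B \<longleftrightarrow> (\<forall>x. 0 \<le> x \<bullet> ((B - A) *v x))"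

definition symmetric_mat :: "real^'n^'n \<Rightarrow> bool" where
  "symmetric_mat A \<longleftrightarrow> transpose A = A"

definition spec_lipschitz_on :: "real \<Rightarrow> 'a::real_normed_vector set \<Rightarrow> ('a \<Rightarrow> real^'n^'m) \<Rightarrow> bool" where
  "spec_lipschitz_on L Xi F \<longleftrightarrow>
     (\<forall>\<xi>1\<in>Xi. \<forall>\<xi>2\<in>Xi. spec_norm (F \<xi>1 - F \<xi>2) \<le> L * norm (\<xi>1 - \<xi>2))"

definition block2 :: "real^'n^'n \<Rightarrow> real^'n^'n \<Rightarrow> real^'n^'n \<Rightarrow> real^'n^'n \<Rightarrow> real^('n+'n)^('n+'n)" where
  "block2 M11 M12 M21 M22 = (\<chi> i j. case i of
      Inl a \<Rightarrow> (case j of Inl b \<Rightarrow> M11 $ a $ b | Inr b \<Rightarrow> M12 $ a $ b)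
    | Inr a \<Rightarrow> (case j of Inl b \<Rightarrow> M21 $ a $ b | Inr b \<Rightarrow> M22 $ a $ b))"

definition Xm :: "('a \<Rightarrow> real^'n^'n) \<Rightarrow> ('a \<Rightarrow> real^'m^'n) \<Rightarrow> real^'n^'n \<Rightarrow> real^'n^'m \<Rightarrow> 'a \<Rightarrow> real^'n^'n" where
  "Xm At Bt P Y \<xi> = At \<xi> ** P - Bt \<xi> ** Y"

definition f1 :: "real \<Rightarrow> ('a \<Rightarrow> real^'n^'n) \<Rightarrow> ('a \<Rightarrow> real^'m^'n) \<Rightarrow> real^'n^'n \<Rightarrow> real^'n^'m \<Rightarrow> real \<Rightarrow> 'a \<Rightarrow> real^'n^'n" where
  "f1 \<alpha> At Bt P Y \<gamma> \<xi> = (let X = Xm At Bt P Y \<xi> in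
     X + transpose X + (2 * \<alpha>) *\<^sub>R P - \<gamma> *\<^sub>R mat 1)"

definition f2 :: "real \<Rightarrow> ('a \<Rightarrow> real^'n^'n) \<Rightarrow> ('a \<Rightarrow> real^'m^'n) \<Rightarrow> real^'n^'n \<Rightarrow> real^'n^'m \<Rightarrow> real \<Rightarrow> 'a \<Rightarrow> real^('n+'n)^('n+'n)" where
  "f2 r At Bt P Y \<gamma> \<xi> = (let X = Xm At Bt P Y \<xi> in
     block2 (- r *\<^sub>R P) X (transpose X) (- r *\<^sub>R P) - \<gamma> *\<^sub>R mat 1)"

definition f3 :: "real \<Rightarrow> ('a \<Rightarrow> real^'n^'n) \<Rightarrow> ('a \<Rightarrow> real^'m^'n) \<Rightarrow> real^'n^'n \<Rightarrow> real^'n^'m \<Rightarrow> real \<Rightarrow> 'a \<Rightarrow> real^('n+'n)^('n+'n)" where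
  "f3 \<theta> At Bt P Y \<gamma> \<xi> = (let X = Xm At Bt P Y \<xi> in
     block2 (sin \<theta> *\<^sub>R (X + transpose X)) (cos \<theta> *\<^sub>R (X - transpose X))
            (cos \<theta> *\<^sub>R (transpose X - X)) (sin \<theta> *\<^sub>R (X + transpose X)) - \<gamma> *\<^sub>R mat 1)"

end

theory Submission
  imports Defs
begin


lemma sn_bound: "norm (A *v x) \<le> spec_norm A * norm (x::real^'n)" for A :: "real^'n^'m"
  unfolding spec_norm_def by (rule onorm) simp

lemma sn_le: "(\<And>x. norm (A *v x) \<le> b * norm x) \<Longrightarrow> spec_norm (A::real^'n^'m) \<le> b"
  unfolding spec_norm_def by (rule onorm_le)

lemma sn_nonneg: "0 \<le> spec_norm (A::real^'n^'m)"
  unfolding spec_norm_def by (rule onorm_pos_le) simp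

lemma sn_triangle: "spec_norm (A + B) \<le> spec_norm A + spec_norm (B::real^'n^'m)"
proof (rule sn_le)
  fix x :: "real^'n"
  have "norm ((A+B) *v x) \<le> norm (A *v x) + norm (B *v x)"
    by (simp add: matrix_vector_mult_add_rdistrib norm_triangle_ineq)
  also have "\<dots> \<le> spec_norm A * norm x + spec_norm B * norm x"
    using sn_bound[of A x] sn_bound[of B x] by linarith
  finally show "norm ((A+B) *v x) \<le> (spec_norm A + spec_norm B) * norm x" by (simp add: algebra_simps)
qed

lemma sn_minus: "spec_norm (- A) = spec_norm (A::real^'n^'m)"
proof -
  have "(\<lambda>x. (- A) *v x) = (\<lambda>x. - (A *v x))"
    by (rule ext) (metis add.right_inverse add_eq_0_iff matrix_vector_mult_add_rdistrib matrix_vector_mult_0)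
  then show ?thesis unfolding spec_norm_def using onorm_neg[of "\<lambda>x. A *v x"] by simp
qed

lemma sn_diff: "spec_norm (A - B) \<le> spec_norm A + spec_norm (B::real^'n^'m)"
  using sn_triangle[of A "- B"] sn_minus[of B] by simp

lemma sn_scale: "spec_norm (c *\<^sub>R A) = \<bar>c\<bar> * spec_norm (A::real^'n^'m)"
proof -
  have "(\<lambda>x. (c *\<^sub>R A) *v x) = (\<lambda>x. c *\<^sub>R (A *v x))"
    by (rule ext) (simp add: vec_eq_iff matrix_vector_mult_def sum_distrib_left algebra_simps)
  then show ?thesis unfolding spec_norm_def using onorm_scaleR[of "\<lambda>x. A *v x" c] by simp
qed

lemma sn_mult: "spec_norm (A ** B) \<le> spec_norm A * spec_norm (B::real^'n^'k)" for A :: "real^'k^'m"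
proof (rule sn_le)
  fix x :: "real^'n"
  have "norm ((A ** B) *v x) = norm (A *v (B *v x))" by (simp add: matrix_vector_mul_assoc)
  also have "\<dots> \<le> spec_norm A * norm (B *v x)" by (rule sn_bound)
  also have "\<dots> \<le> spec_norm A * (spec_norm B * norm x)"
    by (rule mult_left_mono[OF sn_bound sn_nonneg])
  finally show "norm ((A ** B) *v x) \<le> spec_norm A * spec_norm B * norm x" by simp
qed

lemma sn_transpose: "spec_norm (transpose A) \<le> spec_norm (A::real^'n^'m)"
proof (rule sn_le)
  fix y :: "real^'m"
  have "(norm (transpose A *v y))^2 = (transpose A *v y) \<bullet> (transpose A *v y)"
    by (simp add: power2_norm_eq_inner)
  also have "\<dots> = y \<bullet> (A *v (transpose A *v y))"
    by (simp add: dot_lmul_matrix)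
  also have "\<dots> \<le> norm y * norm (A *v (transpose A *v y))" by (rule norm_cauchy_schwarz)
  also have "\<dots> \<le> norm y * (spec_norm A * norm (transpose A *v y))"
    by (rule mult_left_mono[OF sn_bound]) simp
  finally have *: "(norm (transpose A *v y))^2 \<le> (spec_norm A * norm y) * norm (transpose A *v y)"
    by (simp add: algebra_simps)
  show "norm (transpose A *v y) \<le> spec_norm A * norm y"
  proof (cases "norm (transpose A *v y) = 0")
    case True then show ?thesis using sn_nonneg[of A] by simp
  next
    case False
    then have "norm (transpose A *v y) > 0" by simp
    with * show ?thesis by (simp add: power2_eq_square)
  qed
qed




lemma sum_plus_univ: "(\<Sum>i\<in>(UNIV::('n::finite+'n) set). g i) = (\<Sum>a\<in>UNIV. g (Inl a)) + (\<Sum>a\<in>UNIV. g (Inr a))"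
  by (metis (no_types, lifting) UNIV_Plus_UNIV finite sum.Plus comp_apply sum.cong)

definition vl :: "real^('n+'n) \<Rightarrow> real^'n" where "vl z = (\<chi> a. z $ Inl a)"
definition vr :: "real^('n+'n) \<Rightarrow> real^'n" where "vr z = (\<chi> a. z $ Inr a)"

lemma norm_split: "(norm z)^2 = (norm (vl z))^2 + (norm (vr z))^2"
  unfolding power2_norm_eq_inner inner_vec_def vl_def vr_def
  by (simp add: sum_plus_univ)

lemma block_mult_l: "vl (block2 M11 M12 M21 M22 *v z) = M11 *v vl z + M12 *v vr z"
  unfolding vl_def vr_def block2_def
  by (simp add: vec_eq_iff matrix_vector_mult_def sum_plus_univ)

lemma block_mult_r: "vr (block2 M11 M12 M21 M22 *v z) = M21 *v vl z + M22 *v vr z"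
  unfolding vl_def vr_def block2_def
  by (simp add: vec_eq_iff matrix_vector_mult_def sum_plus_univ)

lemma aux_sq: fixes a b u v :: real
  assumes "2*(a * b)*(u * v) \<le> (a * b)*(u^2+v^2)"
  shows "(a * u+b * v)^2 + (b * u+a * v)^2 \<le> (a+b)^2*(u^2+v^2)"
proof -
  have e1: "(a * u+b * v)^2 + (b * u+a * v)^2 = (a^2+b^2)*(u^2+v^2) + 2*(2*(a * b)*(u * v))"
    by algebra
  have e2: "(a+b)^2*(u^2+v^2) = (a^2+b^2)*(u^2+v^2) + 2*((a * b)*(u^2+v^2))"
    by algebra
  show ?thesis unfolding e1 e2 using assms by linarith
qed

lemma aux_amgm: fixes u v :: real shows "2 * (u * v) \<le> u^2 + v^2"
  using sum_squares_ge_zero[of "u - v" 0] by (simp add: power2_eq_square algebra_simps)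

lemma sn_bnd: "spec_norm M \<le> c \<Longrightarrow> norm (M *v x) \<le> c * norm x"
  using sn_bound[of M x] mult_right_mono[of "spec_norm M" c "norm x"] by simp

lemma sn_block:
  fixes M11 M12 M21 M22 :: "real^'n^'n"
  assumes "spec_norm M11 \<le> a" "spec_norm M22 \<le> a" "spec_norm M12 \<le> b" "spec_norm M21 \<le> b"
  shows "spec_norm (block2 M11 M12 M21 M22) \<le> a + b"
proof (rule sn_le)
  fix z :: "real^('n+'n)"
  define u where "u = vl z"
  define v where "v = vr z"
  define w where "w = block2 M11 M12 M21 M22 *v z"
  have a0: "0 \<le> a" using assms(1) sn_nonneg[of M11] by linarith
  have b0: "0 \<le> b" using assms(3) sn_nonneg[of M12] by linarith
  have l: "norm (vl w) \<le> a * norm u + b * norm v"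
  proof -
    have "norm (vl w) \<le> norm (M11 *v u) + norm (M12 *v v)"
      unfolding w_def block_mult_l u_def v_def by (rule norm_triangle_ineq)
    moreover have "norm (M11 *v u) \<le> a * norm u" by (rule sn_bnd[OF assms(1)])
    moreover have "norm (M12 *v v) \<le> b * norm v" by (rule sn_bnd[OF assms(3)])
    ultimately show ?thesis by linarith
  qed
  have r: "norm (vr w) \<le> b * norm u + a * norm v"
  proof -
    have "norm (vr w) \<le> norm (M21 *v u) + norm (M22 *v v)"
      unfolding w_def block_mult_r u_def v_def by (rule norm_triangle_ineq)
    moreover have "norm (M21 *v u) \<le> b * norm u" by (rule sn_bnd[OF assms(4)])
    moreover have "norm (M22 *v v) \<le> a * norm v" by (rule sn_bnd[OF assms(2)])
    ultimately show ?thesis by linarith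
  qed
  have l2: "(norm (vl w))^2 \<le> (a * norm u + b * norm v)^2" by (rule power_mono[OF l norm_ge_zero])
  have r2: "(norm (vr w))^2 \<le> (b * norm u + a * norm v)^2" by (rule power_mono[OF r norm_ge_zero])
  have "(norm w)^2 \<le> (a * norm u + b * norm v)^2 + (b * norm u + a * norm v)^2"
    unfolding norm_split[of w] by (rule add_mono[OF l2 r2])
  also have "\<dots> \<le> (a+b)^2 * ((norm u)^2 + (norm v)^2)"
  proof (rule aux_sq)
    have ab: "0 \<le> a*b" using a0 b0 by simp
    show "2 * (a * b) * (norm u * norm v) \<le> a * b * ((norm u)\<^sup>2 + (norm v)\<^sup>2)"
      using mult_left_mono[OF aux_amgm[of "norm u" "norm v"] ab] by (simp only: mult.assoc mult.left_commute)
  qed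
  also have "\<dots> = ((a + b) * norm z)^2"
    unfolding power_mult_distrib u_def v_def norm_split[of z] ..
  finally have sq: "(norm w)^2 \<le> ((a + b) * norm z)^2" .
  have "0 \<le> (a + b) * norm z" using a0 b0 by simp
  from power2_le_imp_le[OF sq this] show "norm (block2 M11 M12 M21 M22 *v z) \<le> (a + b) * norm z"
    unfolding w_def .
qed

lemma sym_inner: "symmetric_mat P \<Longrightarrow> y \<bullet> (P *v x) = x \<bullet> (P *v (y::real^'n))"
  unfolding symmetric_mat_def
  by (metis dot_lmul_matrix inner_commute vector_transpose_matrix)

lemma sn_psd:
  fixes P :: "real^'n^'n"
  assumes s: "symmetric_mat P" and p0: "loewner_le 0 P" and p1: "loewner_le P (\<mu> *\<^sub>R mat 1)"
  shows "spec_norm P \<le> \<mu>"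
proof (rule sn_le)
  fix x :: "real^'n"
  let ?q = "\<lambda>z. z \<bullet> (P *v z)"
  have q0: "0 \<le> ?q z" for z using p0 unfolding loewner_le_def by simp
  have q1: "?q z \<le> \<mu> * (norm z)^2" for z
  proof -
    have "0 \<le> z \<bullet> ((\<mu> *\<^sub>R mat 1 - P) *v z)" using p1 unfolding loewner_le_def by blast
    moreover have "(\<mu> *\<^sub>R mat 1) *v z = \<mu> *\<^sub>R z"
    proof -
      have "(\<mu> *\<^sub>R mat 1) *v z = \<mu> *\<^sub>R (mat 1 *v z)"
        by (simp add: vec_eq_iff matrix_vector_mult_def sum_distrib_left mult.assoc)
      then show ?thesis by simp
    qed
    then have "(\<mu> *\<^sub>R mat 1 - P) *v z = \<mu> *\<^sub>R z - P *v z"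
      by (simp add: matrix_vector_mult_diff_rdistrib)
    ultimately show ?thesis by (simp add: inner_diff_right power2_norm_eq_inner)
  qed
  show "norm (P *v x) \<le> \<mu> * norm x"
  proof (cases "P *v x = 0")
    case True
    have "0 \<le> \<mu> * (norm x)^2" using q1[of x] q0[of x] by linarith
    then have "0 \<le> \<mu> \<or> x = 0" by (cases "x = 0") (auto simp: zero_le_mult_iff)
    then show ?thesis using True by auto
  next
    case False
    define y where "y = (norm x / norm (P *v x)) *\<^sub>R (P *v x)"
    have ny: "norm y = norm x" using False unfolding y_def by simp
    have yPx: "y \<bullet> (P *v x) = norm x * norm (P *v x)"
      using False unfolding y_def by (simp add: power2_norm_eq_inner[symmetric] power2_eq_square)
    have "?q (x + y) - ?q (x - y) = 4 * (y \<bullet> (P *v x))"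
      using sym_inner[OF s, of y x]
      by (simp add: matrix_vector_right_distrib matrix_vector_mult_diff_distrib inner_add_left inner_add_right inner_diff_left inner_diff_right)
    then have "4 * (norm x * norm (P *v x)) \<le> \<mu> * (norm (x + y))^2"
      using q0[of "x - y"] q1[of "x + y"] yPx by linarith
    also have "\<dots> \<le> \<mu> * (2 * norm x)^2"
    proof -
      have "0 \<le> \<mu> * (norm x)^2" using q1[of x] q0[of x] by linarith
      then have m0: "0 \<le> \<mu>" using False by (cases "x = 0") (auto simp: zero_le_mult_iff)
      have "norm (x + y) \<le> 2 * norm x" using norm_triangle_ineq[of x y] ny by simp
      then have "(norm (x + y))^2 \<le> (2 * norm x)^2" by (intro power_mono) auto
      then show ?thesis using m0 by (rule mult_left_mono)
    qed
    finally have "norm x * norm (P *v x) \<le> norm x * (\<mu> * norm x)"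
      by (simp add: power2_eq_square algebra_simps)
    moreover have "norm x > 0" using False by auto
    ultimately show ?thesis by (simp add: mult.commute)
  qed
qed



lemma mm_diff_r: "(A - B) ** C = A ** C - B ** (C::real^'n^'k)" for A B :: "real^'k^'m"
  by (simp add: vec_eq_iff matrix_matrix_mult_def sum_subtractf algebra_simps)

lemma transpose_diff': "transpose (A - B) = transpose A - transpose (B::real^'n^'m)"
  by (simp add: vec_eq_iff transpose_def)

lemma transpose_add': "transpose (A + B) = transpose A + transpose (B::real^'n^'m)"
  by (simp add: vec_eq_iff transpose_def)

lemma block2_diff: "block2 A B C D - block2 A' B' C' D' = block2 (A - A') (B - B') (C - C') (D - D')"
  by (simp add: vec_eq_iff block2_def split: sum.split)

lemma sn_zero: "spec_norm (0::real^'n^'m) = 0"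
  using sn_scale[of 0 "0::real^'n^'m"] by simp

theorem lemma1:
  fixes Xi :: "'a::real_normed_vector set"
    and At :: "'a \<Rightarrow> real^'n^'n" and Bt :: "'a \<Rightarrow> real^'m^'n"
    and LA LB \<alpha> r \<theta> \<mu> :: real
  assumes LA: "LA \<ge> 0" and LB: "LB \<ge> 0"
    and lipA: "spec_lipschitz_on LA Xi At"
    and lipB: "spec_lipschitz_on LB Xi Bt"
    and "\<alpha> > 0" and "r > 0" and "\<mu> > 0"
  shows "\<forall>P :: real^'n^'n. \<forall>Y :: real^'n^'m. \<forall>\<gamma> :: real.
           symmetric_mat P \<and> loewner_le 0 P \<and> loewner_le P (\<mu> *\<^sub>R mat 1) \<and> spec_norm Y \<le> \<mu> \<longrightarrow>
           (let L = 2 * \<mu> * (LA + LB) * max 1 (\<bar>sin \<theta>\<bar> + \<bar>cos \<theta>\<bar>) in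
             (\<forall>\<xi>1\<in>Xi. \<forall>\<xi>2\<in>Xi.
                spec_norm (f1 \<alpha> At Bt P Y \<gamma> \<xi>1 - f1 \<alpha> At Bt P Y \<gamma> \<xi>2) \<le> L * norm (\<xi>1 - \<xi>2) \<and>
                spec_norm (f2 r At Bt P Y \<gamma> \<xi>1 - f2 r At Bt P Y \<gamma> \<xi>2) \<le> L * norm (\<xi>1 - \<xi>2) \<and>
                spec_norm (f3 \<theta> At Bt P Y \<gamma> \<xi>1 - f3 \<theta> At Bt P Y \<gamma> \<xi>2) \<le> L * norm (\<xi>1 - \<xi>2)))"
proof (intro allI impI)
  fix P :: "real^'n^'n" and Y :: "real^'n^'m" and \<gamma> :: real
  assume H: "symmetric_mat P \<and> loewner_le 0 P \<and> loewner_le P (\<mu> *\<^sub>R mat 1) \<and> spec_norm Y \<le> \<mu>"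
  have nP: "spec_norm P \<le> \<mu>" using H sn_psd by blast
  have nY: "spec_norm Y \<le> \<mu>" using H by blast
  define s where "s = sin \<theta>"
  define c where "c = cos \<theta>"
  define M where "M = max 1 (\<bar>s\<bar> + \<bar>c\<bar>)"
  have M1: "1 \<le> M" and M2: "\<bar>s\<bar> + \<bar>c\<bar> \<le> M" unfolding M_def by auto
  show "let L = 2 * \<mu> * (LA + LB) * max 1 (\<bar>sin \<theta>\<bar> + \<bar>cos \<theta>\<bar>) in
             (\<forall>\<xi>1\<in>Xi. \<forall>\<xi>2\<in>Xi.
                spec_norm (f1 \<alpha> At Bt P Y \<gamma> \<xi>1 - f1 \<alpha> At Bt P Y \<gamma> \<xi>2) \<le> L * norm (\<xi>1 - \<xi>2) \<and>
                spec_norm (f2 r At Bt P Y \<gamma> \<xi>1 - f2 r At Bt P Y \<gamma> \<xi>2) \<le> L * norm (\<xi>1 - \<xi>2) \<and>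
                spec_norm (f3 \<theta> At Bt P Y \<gamma> \<xi>1 - f3 \<theta> At Bt P Y \<gamma> \<xi>2) \<le> L * norm (\<xi>1 - \<xi>2))"
    unfolding Let_def s_def[symmetric] c_def[symmetric] M_def[symmetric]
  proof (intro ballI conjI)
    fix \<xi>1 \<xi>2 assume x1: "\<xi>1 \<in> Xi" and x2: "\<xi>2 \<in> Xi"
    define d where "d = norm (\<xi>1 - \<xi>2)"
    have d0: "0 \<le> d" unfolding d_def by simp
    define X1 where "X1 = Xm At Bt P Y \<xi>1"
    define X2 where "X2 = Xm At Bt P Y \<xi>2"
    define D where "D = X1 - X2"
    define K where "K = \<mu> * (LA + LB) * d"
    have K0: "0 \<le> K" unfolding K_def using LA LB d0 \<open>\<mu> > 0\<close> by simp
    have hD: "spec_norm D \<le> K"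
    proof -
      have "D = (At \<xi>1 - At \<xi>2) ** P - (Bt \<xi>1 - Bt \<xi>2) ** Y"
        unfolding D_def X1_def X2_def Xm_def by (simp add: mm_diff_r algebra_simps)
      then have "spec_norm D \<le> spec_norm ((At \<xi>1 - At \<xi>2) ** P) + spec_norm ((Bt \<xi>1 - Bt \<xi>2) ** Y)"
        using sn_diff by metis
      also have "\<dots> \<le> spec_norm (At \<xi>1 - At \<xi>2) * spec_norm P + spec_norm (Bt \<xi>1 - Bt \<xi>2) * spec_norm Y"
        by (intro add_mono sn_mult)
      also have "\<dots> \<le> (LA * d) * \<mu> + (LB * d) * \<mu>"
      proof (intro add_mono mult_mono)
        show "spec_norm (At \<xi>1 - At \<xi>2) \<le> LA * d"
          using lipA x1 x2 unfolding spec_lipschitz_on_def d_def by blast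
        show "spec_norm (Bt \<xi>1 - Bt \<xi>2) \<le> LB * d"
          using lipB x1 x2 unfolding spec_lipschitz_on_def d_def by blast
      qed (use nP nY LA LB d0 sn_nonneg in auto)
      finally show ?thesis unfolding K_def by (simp add: algebra_simps)
    qed
    have hDT: "spec_norm (transpose D) \<le> K" using sn_transpose[of D] hD by linarith
    have L1: "2 * K \<le> 2 * \<mu> * (LA + LB) * M * d"
    proof -
      have "2 * K * 1 \<le> 2 * K * M" using K0 M1 by (intro mult_left_mono) auto
      then show ?thesis unfolding K_def by (simp add: algebra_simps)
    qed
    have L3: "(\<bar>s\<bar> * (2 * K)) + (\<bar>c\<bar> * (2 * K)) \<le> 2 * \<mu> * (LA + LB) * M * d"
    proof -
      have "2 * K * (\<bar>s\<bar> + \<bar>c\<bar>) \<le> 2 * K * M" using K0 M2 by (intro mult_left_mono) auto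
      then show ?thesis unfolding K_def by (simp add: algebra_simps)
    qed
    have hS: "spec_norm (D + transpose D) \<le> 2 * K" using sn_triangle[of D "transpose D"] hD hDT by linarith
    have hK: "spec_norm (D - transpose D) \<le> 2 * K" using sn_diff[of D "transpose D"] hD hDT by linarith
    have hK': "spec_norm (transpose D - D) \<le> 2 * K" using sn_diff[of "transpose D" D] hD hDT by linarith
    show "spec_norm (f1 \<alpha> At Bt P Y \<gamma> \<xi>1 - f1 \<alpha> At Bt P Y \<gamma> \<xi>2) \<le> 2 * \<mu> * (LA + LB) * M * d"
    proof -
      have "f1 \<alpha> At Bt P Y \<gamma> \<xi>1 - f1 \<alpha> At Bt P Y \<gamma> \<xi>2 = D + transpose D"
        unfolding f1_def Let_def X1_def[symmetric] X2_def[symmetric] D_def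
        by (simp add: transpose_diff' algebra_simps)
      then show ?thesis using hS L1 by simp
    qed
    show "spec_norm (f2 r At Bt P Y \<gamma> \<xi>1 - f2 r At Bt P Y \<gamma> \<xi>2) \<le> 2 * \<mu> * (LA + LB) * M * d"
    proof -
      have "f2 r At Bt P Y \<gamma> \<xi>1 - f2 r At Bt P Y \<gamma> \<xi>2 = block2 0 D (transpose D) 0"
        unfolding f2_def Let_def X1_def[symmetric] X2_def[symmetric] D_def
        by (simp add: block2_diff transpose_diff')
      moreover have "spec_norm (block2 0 D (transpose D) 0) \<le> 0 + K"
        by (rule sn_block) (use hD hDT in \<open>auto simp: sn_zero\<close>)
      ultimately show ?thesis using L1 K0 by simp
    qed
    show "spec_norm (f3 \<theta> At Bt P Y \<gamma> \<xi>1 - f3 \<theta> At Bt P Y \<gamma> \<xi>2) \<le> 2 * \<mu> * (LA + LB) * M * d"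
    proof -
      have "f3 \<theta> At Bt P Y \<gamma> \<xi>1 - f3 \<theta> At Bt P Y \<gamma> \<xi>2 =
          block2 (s *\<^sub>R (D + transpose D)) (c *\<^sub>R (D - transpose D))
                 (c *\<^sub>R (transpose D - D)) (s *\<^sub>R (D + transpose D))"
        unfolding f3_def Let_def X1_def[symmetric] X2_def[symmetric] D_def s_def c_def
        by (simp add: block2_diff transpose_diff' algebra_simps)
      moreover have "spec_norm (block2 (s *\<^sub>R (D + transpose D)) (c *\<^sub>R (D - transpose D))
                 (c *\<^sub>R (transpose D - D)) (s *\<^sub>R (D + transpose D))) \<le> \<bar>s\<bar> * (2 * K) + \<bar>c\<bar> * (2 * K)"
        by (rule sn_block) (use hS hK hK' in \<open>auto simp: sn_scale intro: mult_left_mono\<close>)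
      ultimately show ?thesis using L3 by simp
    qed
  qed
qed

end
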